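(* Let $G=(V,E)$ be a network, $s,t\in V$, and $B$ any bound. Let $L^{(s,t)}$ be the set of weight-shortest paths from $s$ to $t$, and let $\mathbb{L}=\bigcap_{\pi\in L^{(s,t)}}\pi$ be the set of in-all-weight-shortest-paths links. Then every survivable connection $(\pi_1,\pi_2)$ that is an optimal solution of the CT-Constrained QoS Max-Survivability problem with bound $B$ satisfies $\mathbb{C}(\pi_1,\pi_2)\subseteq\mathbb{L}$.
   Context: A network is a directed graph $G=(V,E)$, $N=|V|$, $M=|E|$. Each link $e$ has a failure probability $p_e\in(0,p_{max}]$ with $p_{max}<1$, and a positive weight $w_e$. Paths are identified with their sets of links. $P^{(s,t)}$ is the set of simple paths from $s$ to $t$. A survivable connection from $s$ to $t$ is a pair $(\pi_1,\pi_2)\in P^{(s,t)}\times P^{(s,t)}$; the two paths may coincide. Its critical links are $\mathbb{C}(\pi_1,\pi_2)=\pi_1\cap\pi_2$. Its survivability level is $\prod_{e\in\pi_1\cap\pi_2}(1-p_e)$, which equals $1$ if there are no critical links. The weight of a path is $W(\pi)=\sum_{e\in\pi}w_e$. A weight-shortest path from $u$ to $v$ is a path from $u$ to $v$ of minimum weight. The CT-weight of a connection is $W_{CT}(\pi_1,\pi_2)=W(\pi_1)+W(\pi_2)$. CT-Constrained QoS Max-Survivability (CT-CQMS) problem: given $G$, $s$, $t$ and a bound $B$, find a survivable connection $(\pi_1,\pi_2)$ from $s$ to $t$ maximizing $\prod_{e\in\pi_1\cap\pi_2}(1-p_e)$ subject to $W_{CT}(\pi_1,\pi_2)\le B$. 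*)

theory Defs
  imports Complex_Main
begin

definition network ::
  "'v set \<Rightarrow> ('v \<times> 'v) set \<Rightarrow> ('v \<times> 'v \<Rightarrow> real) \<Rightarrow> real \<Rightarrow> ('v \<times> 'v \<Rightarrow> real) \<Rightarrow> bool" where
  "network V E p pmax w \<longleftrightarrow> finite V \<and> E \<subseteq> V \<times> V \<and> pmax < 1 \<and>
     (\<forall>e\<in>E. 0 < p e \<and> p e \<le> pmax \<and> 0 < w e)"

definition links_of :: "'v list \<Rightarrow> ('v \<times> 'v) set" where
  "links_of xs = set (zip xs (tl xs))"

definition simple_paths ::
  "'v set \<Rightarrow> ('v \<times> 'v) set \<Rightarrow> 'v \<Rightarrow> 'v \<Rightarrow> ('v \<times> 'v) set set" where
  "simple_paths V E s t = {links_of xs | xs. xs \<noteq> [] \<and> hd xs = s \<and> last xs = t \<and>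
      distinct xs \<and> set xs \<subseteq> V \<and> links_of xs \<subseteq> E}"

definition path_weight :: "('v \<times> 'v \<Rightarrow> real) \<Rightarrow> ('v \<times> 'v) set \<Rightarrow> real" where
  "path_weight w \<pi> = (\<Sum>e\<in>\<pi>. w e)"

definition shortest_paths ::
  "'v set \<Rightarrow> ('v \<times> 'v) set \<Rightarrow> ('v \<times> 'v \<Rightarrow> real) \<Rightarrow> 'v \<Rightarrow> 'v \<Rightarrow> ('v \<times> 'v) set set" where
  "shortest_paths V E w s t = {\<pi> \<in> simple_paths V E s t.
      \<forall>\<pi>'\<in>simple_paths V E s t. path_weight w \<pi> \<le> path_weight w \<pi>'}"

definition in_all_sp_links ::
  "'v set \<Rightarrow> ('v \<times> 'v) set \<Rightarrow> ('v \<times> 'v \<Rightarrow> real) \<Rightarrow> 'v \<Rightarrow> 'v \<Rightarrow> ('v \<times> 'v) set" where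
  "in_all_sp_links V E w s t = \<Inter> (shortest_paths V E w s t)"

definition critical_links :: "('v \<times> 'v) set \<Rightarrow> ('v \<times> 'v) set \<Rightarrow> ('v \<times> 'v) set" where
  "critical_links \<pi>1 \<pi>2 = \<pi>1 \<inter> \<pi>2"

definition survivability ::
  "('v \<times> 'v \<Rightarrow> real) \<Rightarrow> ('v \<times> 'v) set \<Rightarrow> ('v \<times> 'v) set \<Rightarrow> real" where
  "survivability p \<pi>1 \<pi>2 = (\<Prod>e\<in>critical_links \<pi>1 \<pi>2. 1 - p e)"

definition CT_weight ::
  "('v \<times> 'v \<Rightarrow> real) \<Rightarrow> ('v \<times> 'v) set \<Rightarrow> ('v \<times> 'v) set \<Rightarrow> real" where
  "CT_weight w \<pi>1 \<pi>2 = path_weight w \<pi>1 + path_weight w \<pi>2"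

definition CT_feasible ::
  "'v set \<Rightarrow> ('v \<times> 'v) set \<Rightarrow> ('v \<times> 'v \<Rightarrow> real) \<Rightarrow> 'v \<Rightarrow> 'v \<Rightarrow> real
   \<Rightarrow> ('v \<times> 'v) set \<Rightarrow> ('v \<times> 'v) set \<Rightarrow> bool" where
  "CT_feasible V E w s t B \<pi>1 \<pi>2 \<longleftrightarrow>
     \<pi>1 \<in> simple_paths V E s t \<and> \<pi>2 \<in> simple_paths V E s t \<and> CT_weight w \<pi>1 \<pi>2 \<le> B"

definition CT_CQMS_optimal ::
  "'v set \<Rightarrow> ('v \<times> 'v) set \<Rightarrow> ('v \<times> 'v \<Rightarrow> real) \<Rightarrow> ('v \<times> 'v \<Rightarrow> real) \<Rightarrow> 'v \<Rightarrow> 'v \<Rightarrow> real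
   \<Rightarrow> ('v \<times> 'v) set \<Rightarrow> ('v \<times> 'v) set \<Rightarrow> bool" where
  "CT_CQMS_optimal V E p w s t B \<pi>1 \<pi>2 \<longleftrightarrow>
     CT_feasible V E w s t B \<pi>1 \<pi>2 \<and>
     (\<forall>\<sigma>1 \<sigma>2. CT_feasible V E w s t B \<sigma>1 \<sigma>2 \<longrightarrow>
        survivability p \<sigma>1 \<sigma>2 \<le> survivability p \<pi>1 \<pi>2)"

end

theory Submission
  imports Defs
begin



lemma links_Nil[simp]: "links_of [] = {}" and links_single[simp]: "links_of [a] = {}"
  and links_Cons2[simp]: "links_of (a # b # zs) = insert (a,b) (links_of (b # zs))"
  by (auto simp: links_of_def)

lemma links_Cons: "links_of (a # zs) = (if zs = [] then {} else insert (a, hd zs) (links_of zs))"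
  by (cases zs) auto

lemma links_finite[simp]: "finite (links_of xs)"
  by (simp add: links_of_def)

lemma links_mem: "(p,q) \<in> links_of xs \<Longrightarrow> p \<in> set (butlast xs) \<and> q \<in> set (tl xs)"
proof (induction xs rule: induct_list012)
  case (3 a b zs) then show ?case by auto
qed auto

lemma links_mem_set: "(p,q) \<in> links_of xs \<Longrightarrow> p \<in> set xs \<and> q \<in> set xs"
  using links_mem by (metis in_set_butlastD list.set_sel(2) tl_Nil empty_iff list.set(1))

lemma links_append_L: "xs \<noteq> [] \<Longrightarrow> links_of (xs @ ys) = links_of xs \<union> links_of (last xs # ys)"
proof (induction xs rule: induct_list012)
  case (3 a b zs) then show ?case by auto
qed auto

lemma links_append_R: "ys \<noteq> [] \<Longrightarrow> links_of (xs @ ys) = links_of (xs @ [hd ys]) \<union> links_of ys"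
proof (induction xs)
  case Nil then show ?case by (cases ys) auto
next
  case (Cons a xs) then show ?case
    by (cases xs) (auto simp: links_Cons)
qed

lemma links_append_B: "xs \<noteq> [] \<Longrightarrow> ys \<noteq> [] \<Longrightarrow>
   links_of (xs @ ys) = links_of xs \<union> {(last xs, hd ys)} \<union> links_of ys"
  by (simp add: links_append_L links_Cons)

lemma links_disj_L: "distinct (xs @ ys) \<Longrightarrow> xs \<noteq> [] \<Longrightarrow> links_of xs \<inter> links_of (last xs # ys) = {}"
proof -
  assume d: "distinct (xs @ ys)" and ne: "xs \<noteq> []"
  { fix p q assume a: "(p,q) \<in> links_of xs" "(p,q) \<in> links_of (last xs # ys)"
    then have "q \<in> set ys" using links_mem[OF a(2)] by simp
    moreover have "q \<in> set xs" using links_mem_set[OF a(1)] by simp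
    ultimately have False using d by auto }
  then show ?thesis by auto
qed

lemma links_disj_R: "distinct (xs @ ys) \<Longrightarrow> ys \<noteq> [] \<Longrightarrow> links_of (xs @ [hd ys]) \<inter> links_of ys = {}"
proof -
  assume d: "distinct (xs @ ys)" and ne: "ys \<noteq> []"
  { fix p q assume a: "(p,q) \<in> links_of (xs @ [hd ys])" "(p,q) \<in> links_of ys"
    then have "p \<in> set xs" using links_mem[OF a(1)] by simp
    moreover have "p \<in> set ys" using links_mem_set[OF a(2)] by simp
    ultimately have False using d by auto }
  then show ?thesis by auto
qed

lemma links_mid: "b \<noteq> [] \<Longrightarrow>
  links_of (pre @ b @ post) = links_of (pre @ [hd b]) \<union> links_of b \<union> links_of (last b # post)"
  by (metis links_append_L links_append_R append_assoc append_is_Nil_conv last_appendR hd_append2)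

lemma shortcut:
  "xs \<noteq> [] \<Longrightarrow> \<exists>ys. ys \<noteq> [] \<and> distinct ys \<and> hd ys = hd xs \<and> last ys = last xs \<and>
      set ys \<subseteq> set xs \<and> links_of ys \<subseteq> links_of xs"
proof (induction "length xs" arbitrary: xs rule: less_induct)
  case less
  show ?case
  proof (cases "distinct xs")
    case True then show ?thesis using less.prems by blast
  next
    case False
    then obtain p m z q where xs: "xs = p @ [z] @ m @ [z] @ q" using not_distinct_decomp by blast
    let ?xs' = "p @ z # q"
    have "length ?xs' < length xs" using xs by simp
    then obtain ys where ys: "ys \<noteq> [] \<and> distinct ys \<and> hd ys = hd ?xs' \<and> last ys = last ?xs' \<and>
      set ys \<subseteq> set ?xs' \<and> links_of ys \<subseteq> links_of ?xs'"
      using less.hyps[of ?xs'] by (metis Nil_is_append_conv list.distinct(1))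
    have l1: "links_of ?xs' = links_of (p @ [z]) \<union> links_of (z # q)"
      using links_append_R[of "z#q" p] by simp
    have l2: "links_of xs = links_of (p @ [z]) \<union> links_of (z # m @ [z] @ q)"
      using links_append_R[of "z # m @ [z] @ q" p] xs by simp
    have l3: "links_of (z # m @ [z] @ q) = links_of (z # m @ [z]) \<union> links_of (z # q)"
      using links_append_R[of "z#q" "z # m"] by simp
    have "hd ?xs' = hd xs" using xs by (cases p) auto
    moreover have "last ?xs' = last xs" using xs by simp
    moreover have "set ?xs' \<subseteq> set xs" using xs by auto
    moreover have "links_of ?xs' \<subseteq> links_of xs" using l1 l2 l3 by auto
    ultimately show ?thesis using ys by (intro exI[of _ ys]) auto
  qed
qed

lemma split_link: "(x,y) \<in> links_of xs \<Longrightarrow> \<exists>a d. xs = a @ d \<and> a \<noteq> [] \<and> d \<noteq> [] \<and> last a = x \<and> hd d = y"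
proof (induction xs rule: induct_list012)
  case (3 a b zs)
  show ?case
  proof (cases "(x,y) = (a,b)")
    case True then show ?thesis by (intro exI[of _ "[a]"] exI[of _ "b#zs"]) auto
  next
    case False
    then obtain a' d where "b # zs = a' @ d \<and> a' \<noteq> [] \<and> d \<noteq> [] \<and> last a' = x \<and> hd d = y"
      using 3 by auto
    then show ?thesis by (intro exI[of _ "a#a'"] exI[of _ d]) auto
  qed
qed auto



lemma W_nonneg: "\<forall>e\<in>E. 0 < w e \<Longrightarrow> S \<subseteq> E \<Longrightarrow> 0 \<le> path_weight w S"
  unfolding path_weight_def by (intro sum_nonneg) (auto intro: less_imp_le)

lemma W_mono: "\<forall>e\<in>E. 0 < w e \<Longrightarrow> S \<subseteq> T \<Longrightarrow> T \<subseteq> E \<Longrightarrow> finite T \<Longrightarrow>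
   path_weight w S \<le> path_weight w T"
  unfolding path_weight_def by (intro sum_mono2) (auto intro: less_imp_le)

lemma W_union_le: "\<forall>e\<in>E. 0 < w e \<Longrightarrow> S \<subseteq> E \<Longrightarrow> T \<subseteq> E \<Longrightarrow> finite S \<Longrightarrow> finite T \<Longrightarrow>
   path_weight w (S \<union> T) \<le> path_weight w S + path_weight w T"
proof -
  assume a: "\<forall>e\<in>E. 0 < w e" "S \<subseteq> E" "T \<subseteq> E" "finite S" "finite T"
  have "path_weight w (S \<union> T) = path_weight w S + path_weight w T - path_weight w (S \<inter> T)"
    unfolding path_weight_def using a by (simp add: sum_Un)
  moreover have "0 \<le> path_weight w (S \<inter> T)" using W_nonneg[OF a(1)] a by blast
  ultimately show ?thesis by simp
qed

lemma W_disj: "finite S \<Longrightarrow> finite T \<Longrightarrow> S \<inter> T = {} \<Longrightarrow>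
   path_weight w (S \<union> T) = path_weight w S + path_weight w T"
  unfolding path_weight_def by (simp add: sum.union_disjoint)

lemma W_union3_le: "\<forall>e\<in>E. 0 < w e \<Longrightarrow> S \<subseteq> E \<Longrightarrow> T \<subseteq> E \<Longrightarrow> U \<subseteq> E \<Longrightarrow>
   finite S \<Longrightarrow> finite T \<Longrightarrow> finite U \<Longrightarrow>
   path_weight w (S \<union> T \<union> U) \<le> path_weight w S + path_weight w T + path_weight w U"
  using W_union_le[of E w "S \<union> T" U] W_union_le[of E w S T] by auto

lemma walk_path:
  assumes "xs \<noteq> []" "hd xs = s" "last xs = t" "set xs \<subseteq> V" "links_of xs \<subseteq> E"
  shows "\<exists>\<pi>\<in>simple_paths V E s t. \<pi> \<subseteq> links_of xs"
proof -
  obtain ys where ys: "ys \<noteq> []" "distinct ys" "hd ys = hd xs" "last ys = last xs"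
      "set ys \<subseteq> set xs" "links_of ys \<subseteq> links_of xs"
    using shortcut[OF assms(1)] by blast
  have "links_of ys \<in> simple_paths V E s t"
    unfolding simple_paths_def using ys assms by blast
  then show ?thesis using ys by blast
qed



lemma core:
  fixes w :: "'v \<times> 'v \<Rightarrow> real"
  assumes wpos: "\<forall>e\<in>E. 0 < w e"
  and sg: "sg = pre @ b @ post" "b \<noteq> []" "distinct sg" "hd sg = s" "last sg = t" "set sg \<subseteq> V"
     "links_of sg \<subseteq> E"
  and short: "\<forall>\<pi>\<in>simple_paths V E s t. path_weight w (links_of sg) \<le> path_weight w \<pi>"
  and enot: "(x,y) \<notin> links_of sg" and eE: "(x,y) \<in> E"
  and A: "A \<noteq> []" "hd A = s" "last A = x" "set A \<subseteq> V" "links_of A \<subseteq> E" "distinct A"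
  and A': "A' \<noteq> []" "hd A' = s" "last A' = x" "set A' \<subseteq> V" "links_of A' \<subseteq> E"
  and D: "D \<noteq> []" "hd D = y" "last D = t" "set D \<subseteq> V" "links_of D \<subseteq> E" "distinct D"
  and D': "D' \<noteq> []" "hd D' = y" "last D' = t" "set D' \<subseteq> V" "links_of D' \<subseteq> E"
  and uA: "hd b \<in> set A" and vD: "last b \<in> set D"
  and bedges: "\<forall>(p,q)\<in>links_of b. p \<notin> set D \<union> set D' \<and> q \<notin> set A \<union> set A'"
  and Cs: "(links_of A \<union> links_of D) \<inter> (links_of A' \<union> {(x,y)} \<union> links_of D') \<subseteq> C"
  and Wt: "path_weight w (links_of A) + path_weight w (links_of A') + path_weight w (links_of D)
      + path_weight w (links_of D') + 2 * w (x,y) \<le> Wtot"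
  shows "\<exists>\<rho>1 \<rho>2. \<rho>1 \<in> simple_paths V E s t \<and> \<rho>2 \<in> simple_paths V E s t \<and>
     path_weight w \<rho>1 + path_weight w \<rho>2 \<le> Wtot \<and> \<rho>1 \<inter> \<rho>2 \<subseteq> C"
proof -
  define u where "u = hd b"
  define v where "v = last b"
  let ?W = "path_weight w"
  obtain pA qA where pA: "A = pA @ u # qA" using uA u_def split_list by metis
  obtain pD qD where pD: "D = pD @ v # qD" using vD v_def split_list by metis
  have LA: "links_of A = links_of (pA @ [u]) \<union> links_of (u # qA)"
    using links_append_R[of "u # qA" pA] pA by simp
  have DA: "links_of (pA @ [u]) \<inter> links_of (u # qA) = {}"
    using links_disj_R[of pA "u # qA"] pA A(6) by simp
  have LD: "links_of D = links_of (pD @ [v]) \<union> links_of (v # qD)"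
    using links_append_R[of "v # qD" pD] pD by simp
  have DD: "links_of (pD @ [v]) \<inter> links_of (v # qD) = {}"
    using links_disj_R[of pD "v # qD"] pD D(6) by simp
  have WA: "?W (links_of A) = ?W (links_of (pA @ [u])) + ?W (links_of (u # qA))"
    using LA DA W_disj by (metis links_finite)
  have WD: "?W (links_of D) = ?W (links_of (pD @ [v])) + ?W (links_of (v # qD))"
    using LD DD W_disj by (metis links_finite)
  define walk where "walk = (u # qA) @ (pD @ [v])"
  have lastA: "last (u # qA) = x" using A(3) pA by simp
  have hdD: "hd (pD @ [v]) = y" using D(2) pD by (cases pD) auto
  have Lwalk: "links_of walk = links_of (u # qA) \<union> {(x,y)} \<union> links_of (pD @ [v])"
    unfolding walk_def using links_append_B[of "u # qA" "pD @ [v]"] lastA hdD by simp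
  have hdw: "hd walk = u" and lastw: "last walk = v" "walk \<noteq> []" unfolding walk_def by auto
  define gam where "gam = pre @ walk @ post"
  have Lgam: "links_of gam = links_of (pre @ [u]) \<union> links_of walk \<union> links_of (v # post)"
    unfolding gam_def using links_mid[OF lastw(2), of pre post] hdw lastw by simp
  have Lsg: "links_of sg = links_of (pre @ [u]) \<union> links_of b \<union> links_of (v # post)"
    using links_mid[OF sg(2), of pre post] sg(1) u_def v_def by simp
  have d1: "links_of (pre @ [u]) \<inter> links_of (b @ post) = {}"
    using links_disj_R[of pre "b @ post"] sg u_def by simp
  have L2: "links_of (b @ post) = links_of b \<union> links_of (v # post)"
    using links_append_L[OF sg(2)] v_def by simp
  have d2: "links_of b \<inter> links_of (v # post) = {}"
    using links_disj_L[of b post] sg v_def by simp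
  have Wsg: "?W (links_of sg) = ?W (links_of (pre @ [u])) + ?W (links_of b) + ?W (links_of (v # post))"
  proof -
    have "?W (links_of sg) = ?W (links_of (pre @ [u])) + ?W (links_of (b @ post))"
      using Lsg L2 d1 W_disj[of "links_of (pre @ [u])" "links_of (b @ post)" w]
      by (simp add: sup_assoc)
    also have "?W (links_of (b @ post)) = ?W (links_of b) + ?W (links_of (v # post))"
      using L2 d2 W_disj by (metis links_finite)
    finally show ?thesis by simp
  qed
  have sub1: "links_of (pre @ [u]) \<subseteq> E" "links_of (v # post) \<subseteq> E" "links_of b \<subseteq> E"
    using Lsg sg(7) by auto
  have subA: "links_of (pA @ [u]) \<subseteq> E" "links_of (u # qA) \<subseteq> E" using LA A(5) by auto
  have subD: "links_of (pD @ [v]) \<subseteq> E" "links_of (v # qD) \<subseteq> E" using LD D(5) by auto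
  have walkE: "links_of walk \<subseteq> E" using Lwalk subA subD eE by auto
  have gamE: "links_of gam \<subseteq> E" using Lgam walkE sub1 by auto
  have hdgam: "hd gam = s"
    using sg(1,2,4) hdw lastw(2) u_def unfolding gam_def by (cases pre) auto
  have lastgam: "last gam = t"
    using sg(1,5) lastw v_def sg(2) unfolding gam_def by (cases post) auto
  have setgam: "set gam \<subseteq> V"
    using sg(1,6) A(4) D(4) pA pD unfolding gam_def walk_def by auto
  obtain \<pi> where pi: "\<pi> \<in> simple_paths V E s t" "\<pi> \<subseteq> links_of gam"
    using walk_path[of gam s t V E] hdgam lastgam setgam gamE lastw(2) unfolding gam_def by blast
  have "?W (links_of sg) \<le> ?W \<pi>" using short pi by blast
  also have "\<dots> \<le> ?W (links_of gam)" using W_mono[OF wpos pi(2) gamE] by simp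
  also have "\<dots> \<le> ?W (links_of (pre @ [u])) + ?W (links_of walk) + ?W (links_of (v # post))"
    unfolding Lgam by (rule W_union3_le[OF wpos sub1(1) walkE sub1(2)]) auto
  finally have "?W (links_of b) \<le> ?W (links_of walk)" using Wsg by simp
  also have "?W (links_of walk) \<le> ?W (links_of (u # qA)) + ?W {(x,y)} + ?W (links_of (pD @ [v]))"
    unfolding Lwalk by (rule W_union3_le[OF wpos subA(2) _ subD(1)]) (use eE in auto)
  finally have Wb: "?W (links_of b) \<le> ?W (links_of (u # qA)) + w (x,y) + ?W (links_of (pD @ [v]))"
    by (simp add: path_weight_def)
  define w1 where "w1 = pA @ b @ qD"
  have Lw1: "links_of w1 = links_of (pA @ [u]) \<union> links_of b \<union> links_of (v # qD)"
    unfolding w1_def using links_mid[OF sg(2), of pA qD] u_def v_def by simp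
  have w1E: "links_of w1 \<subseteq> E" using Lw1 subA subD sub1 by auto
  have hdw1: "hd w1 = s" using A(2) pA u_def sg(2) unfolding w1_def by (cases pA) auto
  have lastw1: "last w1 = t" using D(3) pD v_def sg(2) unfolding w1_def by (cases qD) auto
  have setw1: "set w1 \<subseteq> V" using A(4) D(4) sg(1,6) pA pD unfolding w1_def by auto
  obtain \<rho>1 where r1: "\<rho>1 \<in> simple_paths V E s t" "\<rho>1 \<subseteq> links_of w1"
    using walk_path[of w1 s t V E] hdw1 lastw1 setw1 w1E sg(2) unfolding w1_def by auto
  define w2 where "w2 = A' @ D'"
  have Lw2: "links_of w2 = links_of A' \<union> {(x,y)} \<union> links_of D'"
    unfolding w2_def using links_append_B[of A' D'] A' D' by simp
  have w2E: "links_of w2 \<subseteq> E" using Lw2 A'(5) D'(5) eE by auto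
  have hdw2: "hd w2 = s" using A' unfolding w2_def by simp
  have lastw2: "last w2 = t" using D' unfolding w2_def by simp
  have setw2: "set w2 \<subseteq> V" using A'(4) D'(4) unfolding w2_def by auto
  obtain \<rho>2 where r2: "\<rho>2 \<in> simple_paths V E s t" "\<rho>2 \<subseteq> links_of w2"
    using walk_path[of w2 s t V E] hdw2 lastw2 setw2 w2E A'(1) unfolding w2_def by auto
  have "?W \<rho>1 \<le> ?W (links_of w1)" using W_mono[OF wpos r1(2) w1E] by simp
  also have "\<dots> \<le> ?W (links_of (pA @ [u])) + ?W (links_of b) + ?W (links_of (v # qD))"
    unfolding Lw1 by (rule W_union3_le[OF wpos subA(1) sub1(3) subD(2)]) auto
  finally have W1: "?W \<rho>1 \<le> ?W (links_of (pA @ [u])) + ?W (links_of b) + ?W (links_of (v # qD))" .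
  have "?W \<rho>2 \<le> ?W (links_of w2)" using W_mono[OF wpos r2(2) w2E] by simp
  also have "\<dots> \<le> ?W (links_of A') + ?W {(x,y)} + ?W (links_of D')"
    unfolding Lw2 by (rule W_union3_le[OF wpos A'(5) _ D'(5)]) (use eE in auto)
  finally have W2: "?W \<rho>2 \<le> ?W (links_of A') + w (x,y) + ?W (links_of D')"
    by (simp add: path_weight_def)
  have Wsum: "?W \<rho>1 + ?W \<rho>2 \<le> Wtot" using W1 W2 Wb WA WD Wt by linarith
  have bsg: "links_of b \<subseteq> links_of sg" using Lsg by auto
  have bA': "links_of b \<inter> links_of A' = {}"
    using bedges links_mem_set by fastforce
  have bD': "links_of b \<inter> links_of D' = {}"
    using bedges links_mem_set by fastforce
  have "\<rho>1 \<inter> \<rho>2 \<subseteq> (links_of A \<union> links_of b \<union> links_of D) \<inter> (links_of A' \<union> {(x,y)} \<union> links_of D')"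
    using r1(2) r2(2) Lw1 Lw2 LA LD by blast
  also have "\<dots> \<subseteq> C" using Cs bA' bD' bsg enot by blast
  finally show ?thesis using r1 r2 Wsum by blast
qed



lemma split_facts:
  assumes "xs = a @ d" "a \<noteq> []" "d \<noteq> []" "last a = x" "hd d = y" "distinct xs"
    "hd xs = s" "last xs = t" "set xs \<subseteq> V" "links_of xs \<subseteq> E"
  shows "hd a = s" "last d = t" "set a \<subseteq> V" "set d \<subseteq> V" "distinct a" "distinct d"
    "set a \<inter> set d = {}" "links_of xs = links_of a \<union> {(x,y)} \<union> links_of d"
    "links_of a \<subseteq> E" "links_of d \<subseteq> E" "(x,y) \<in> E" "(x,y) \<notin> links_of a" "(x,y) \<notin> links_of d"
    "links_of a \<inter> links_of d = {}"
proof -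
  show "hd a = s" "last d = t" "set a \<subseteq> V" "set d \<subseteq> V" "distinct a" "distinct d"
    "set a \<inter> set d = {}" using assms by auto
  show L: "links_of xs = links_of a \<union> {(x,y)} \<union> links_of d"
    using links_append_B[of a d] assms by simp
  then show "links_of a \<subseteq> E" "links_of d \<subseteq> E" "(x,y) \<in> E" using assms by auto
  have "y \<in> set d" "x \<in> set a" using assms by auto
  then show "(x,y) \<notin> links_of a" "(x,y) \<notin> links_of d"
    using links_mem_set \<open>set a \<inter> set d = {}\<close> by fastforce+
  show "links_of a \<inter> links_of d = {}"
    using links_mem_set \<open>set a \<inter> set d = {}\<close> by fastforce
qed

lemma exchange:
  fixes w :: "'v \<times> 'v \<Rightarrow> real"
  assumes wpos: "\<forall>e\<in>E. 0 < w e"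
  and sg: "sg \<noteq> []" "distinct sg" "hd sg = s" "last sg = t" "set sg \<subseteq> V" "links_of sg \<subseteq> E"
  and short: "\<forall>\<pi>\<in>simple_paths V E s t. path_weight w (links_of sg) \<le> path_weight w \<pi>"
  and enot: "(x,y) \<notin> links_of sg"
  and p1: "xs1 = a1 @ d1" "a1 \<noteq> []" "d1 \<noteq> []" "last a1 = x" "hd d1 = y" "distinct xs1"
    "hd xs1 = s" "last xs1 = t" "set xs1 \<subseteq> V" "links_of xs1 \<subseteq> E"
  and p2: "xs2 = a2 @ d2" "a2 \<noteq> []" "d2 \<noteq> []" "last a2 = x" "hd d2 = y" "distinct xs2"
    "hd xs2 = s" "last xs2 = t" "set xs2 \<subseteq> V" "links_of xs2 \<subseteq> E"
  shows "\<exists>\<rho>1 \<rho>2. \<rho>1 \<in> simple_paths V E s t \<and> \<rho>2 \<in> simple_paths V E s t \<and>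
     path_weight w \<rho>1 + path_weight w \<rho>2 \<le> path_weight w (links_of xs1) + path_weight w (links_of xs2)
     \<and> \<rho>1 \<inter> \<rho>2 \<subseteq> links_of xs1 \<inter> links_of xs2 - {(x,y)}"
proof -
  let ?W = "path_weight w"
  note f1 = split_facts[OF p1]
  note f2 = split_facts[OF p2]
  define X where "X = set a1 \<union> set a2"
  define Y where "Y = set d1 \<union> set d2"
  have WP1: "?W (links_of xs1) = ?W (links_of a1) + w (x,y) + ?W (links_of d1)"
  proof -
    have "?W (links_of xs1) = ?W (links_of a1 \<union> {(x,y)}) + ?W (links_of d1)"
      unfolding f1(8) by (rule W_disj) (use f1(13,14) in auto)
    also have "?W (links_of a1 \<union> {(x,y)}) = ?W (links_of a1) + ?W {(x,y)}"
      using f1(12) by (intro W_disj) auto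
    finally show ?thesis by (simp add: path_weight_def)
  qed
  have WP2: "?W (links_of xs2) = ?W (links_of a2) + w (x,y) + ?W (links_of d2)"
  proof -
    have "?W (links_of xs2) = ?W (links_of a2 \<union> {(x,y)}) + ?W (links_of d2)"
      unfolding f2(8) by (rule W_disj) (use f2(13,14) in auto)
    also have "?W (links_of a2 \<union> {(x,y)}) = ?W (links_of a2) + ?W {(x,y)}"
      using f2(12) by (intro W_disj) auto
    finally show ?thesis by (simp add: path_weight_def)
  qed
  have sX: "s \<in> X" using f1(1) p1(2) X_def by auto
  have tY: "t \<in> Y" using f1(2) p1(3) Y_def by auto
  have tX: "t \<notin> X"
  proof -
    have "t \<in> set d1" "t \<in> set d2" using f1(2) f2(2) p1(3) p2(3) by (metis last_in_set)+
    then show ?thesis using f1(7) f2(7) X_def by blast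
  qed
  have "\<exists>z\<in>set sg. z \<in> X" using sg(1,3) sX by (metis hd_in_set)
  then obtain pre u rest where spl: "sg = pre @ u # rest" "u \<in> X" "\<forall>z\<in>set rest. z \<notin> X"
    using split_list_last_prop[of sg "\<lambda>z. z \<in> X"] by blast
  have "\<exists>b post. sg = pre @ b @ post \<and> b \<noteq> [] \<and> hd b = u \<and> last b \<in> Y \<and>
      (\<forall>(p,q)\<in>links_of b. p \<notin> Y \<and> q \<notin> X)"
  proof (cases "u \<in> Y")
    case True
    then show ?thesis using spl by (intro exI[of _ "[u]"] exI[of _ rest]) auto
  next
    case False
    have "rest \<noteq> []" using spl sg(4) tX by auto
    then have "last rest = t" using spl sg(4) by simp
    then have "\<exists>z\<in>set rest. z \<in> Y" using tY \<open>rest \<noteq> []\<close> by (metis last_in_set)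
    then obtain mid v post where sp2: "rest = mid @ v # post" "v \<in> Y" "\<forall>z\<in>set mid. z \<notin> Y"
      using split_list_first_prop[of rest "\<lambda>z. z \<in> Y"] by blast
    have "\<forall>(p,q)\<in>links_of (u # mid @ [v]). p \<notin> Y \<and> q \<notin> X"
    proof (intro ballI, clarify)
      fix p q assume "(p,q) \<in> links_of (u # mid @ [v])"
      from links_mem[OF this] have "p \<in> set (u # mid)" "q \<in> set (mid @ [v])"
        by (simp_all add: butlast_append)
      then show "p \<notin> Y \<and> q \<notin> X" using False sp2 spl(3) by auto
    qed
    then show ?thesis using spl sp2 by (intro exI[of _ "u # mid @ [v]"] exI[of _ post]) auto
  qed
  then obtain b post where bb: "sg = pre @ b @ post" "b \<noteq> []" "hd b = u" "last b \<in> Y"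
      "\<forall>(p,q)\<in>links_of b. p \<notin> Y \<and> q \<notin> X" by blast
  let ?C = "links_of xs1 \<inter> links_of xs2 - {(x,y)}"
  let ?T = "?W (links_of xs1) + ?W (links_of xs2)"
  have uu: "u \<in> set a1 \<or> u \<in> set a2" using spl(2) X_def by auto
  have vv: "last b \<in> set d1 \<or> last b \<in> set d2" using bb(4) Y_def by auto
  have Wt1: "?W (links_of a1) + ?W (links_of a2) + ?W (links_of d1) + ?W (links_of d2) + 2 * w (x,y) \<le> ?T"
    using WP1 WP2 by simp
  have Wt2: "?W (links_of a1) + ?W (links_of a2) + ?W (links_of d2) + ?W (links_of d1) + 2 * w (x,y) \<le> ?T"
    using WP1 WP2 by simp
  have Wt3: "?W (links_of a2) + ?W (links_of a1) + ?W (links_of d1) + ?W (links_of d2) + 2 * w (x,y) \<le> ?T"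
    using WP1 WP2 by simp
  have Wt4: "?W (links_of a2) + ?W (links_of a1) + ?W (links_of d2) + ?W (links_of d1) + 2 * w (x,y) \<le> ?T"
    using WP1 WP2 by simp
  have be1: "\<forall>(p,q)\<in>links_of b. p \<notin> set d1 \<union> set d2 \<and> q \<notin> set a1 \<union> set a2"
    using bb(5) X_def Y_def by blast
  have be2: "\<forall>(p,q)\<in>links_of b. p \<notin> set d2 \<union> set d1 \<and> q \<notin> set a1 \<union> set a2"
    using bb(5) X_def Y_def by blast
  have be3: "\<forall>(p,q)\<in>links_of b. p \<notin> set d1 \<union> set d2 \<and> q \<notin> set a2 \<union> set a1"
    using bb(5) X_def Y_def by blast
  have be4: "\<forall>(p,q)\<in>links_of b. p \<notin> set d2 \<union> set d1 \<and> q \<notin> set a2 \<union> set a1"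
    using bb(5) X_def Y_def by blast
  note coreI = core[OF wpos bb(1) bb(2) sg(2-6) short enot f1(11)]
  show ?thesis
  proof (cases "u \<in> set a1")
    case uA: True
    show ?thesis
    proof (cases "last b \<in> set d1")
      case True
      have Cs: "(links_of a1 \<union> links_of d1) \<inter> (links_of a2 \<union> {(x,y)} \<union> links_of d2) \<subseteq> ?C"
        using f1 f2 by blast
      show ?thesis using coreI[of a1 a2 d1 d2 ?C ?T] uA True bb(3) p1 p2 f1 f2 be1 Cs Wt1 by blast
    next
      case False
      then have vD: "last b \<in> set d2" using vv by blast
      have Cs: "(links_of a1 \<union> links_of d2) \<inter> (links_of a2 \<union> {(x,y)} \<union> links_of d1) \<subseteq> ?C"
        using f1 f2 by blast
      show ?thesis using coreI[of a1 a2 d2 d1 ?C ?T] uA vD bb(3) p1 p2 f1 f2 be2 Cs Wt2 by blast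
    qed
  next
    case False
    then have uA: "u \<in> set a2" using uu by blast
    show ?thesis
    proof (cases "last b \<in> set d1")
      case True
      have Cs: "(links_of a2 \<union> links_of d1) \<inter> (links_of a1 \<union> {(x,y)} \<union> links_of d2) \<subseteq> ?C"
        using f1 f2 by blast
      show ?thesis using coreI[of a2 a1 d1 d2 ?C ?T] uA True bb(3) p1 p2 f1 f2 be3 Cs Wt3 by blast
    next
      case False
      then have vD: "last b \<in> set d2" using vv by blast
      have Cs: "(links_of a2 \<union> links_of d2) \<inter> (links_of a1 \<union> {(x,y)} \<union> links_of d1) \<subseteq> ?C"
        using f1 f2 by blast
      show ?thesis using coreI[of a2 a1 d2 d1 ?C ?T] uA vD bb(3) p1 p2 f1 f2 be4 Cs Wt4 by blast
    qed
  qed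
qed



lemma sp_obtain: "\<pi> \<in> simple_paths V E s t \<Longrightarrow> \<exists>xs. \<pi> = links_of xs \<and> xs \<noteq> [] \<and> hd xs = s \<and> last xs = t
   \<and> distinct xs \<and> set xs \<subseteq> V \<and> links_of xs \<subseteq> E"
  unfolding simple_paths_def by auto

lemma prod_strict:
  fixes p :: "'v \<times> 'v \<Rightarrow> real"
  assumes "finite T" "S \<subseteq> T - {c}" "c \<in> T" "\<forall>e\<in>T. 0 < p e \<and> p e < 1"
  shows "(\<Prod>e\<in>T. 1 - p e) < (\<Prod>e\<in>S. 1 - p e)"
proof -
  have ST: "S \<subseteq> T" using assms(2) by blast
  have eq: "(\<Prod>e\<in>T. 1 - p e) = (\<Prod>e\<in>T - S. 1 - p e) * (\<Prod>e\<in>S. 1 - p e)"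
    using prod.subset_diff[OF ST assms(1)] by simp
  have cin: "c \<in> T - S" using assms(2,3) by blast
  have fin: "finite (T - S)" using assms(1) by simp
  have eq2: "(\<Prod>e\<in>T - S. 1 - p e) = (1 - p c) * (\<Prod>e\<in>T - S - {c}. 1 - p e)"
    using prod.remove[OF fin cin] by simp
  have r1: "(\<Prod>e\<in>T - S - {c}. 1 - p e) \<le> 1"
    using assms(4) by (intro prod_le_1) (auto simp: less_imp_le)
  have r0: "0 \<le> (\<Prod>e\<in>T - S - {c}. 1 - p e)"
    using assms(4) by (intro prod_nonneg) (auto simp: less_imp_le)
  have pc: "0 < 1 - p c" "1 - p c < 1" using assms(3,4) by auto
  have lt: "(\<Prod>e\<in>T - S. 1 - p e) < 1"
  proof -
    have "(1 - p c) * (\<Prod>e\<in>T - S - {c}. 1 - p e) \<le> 1 - p c"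
      using mult_left_le[OF r1] pc(1) by simp
    then show ?thesis unfolding eq2 using pc(2) by linarith
  qed
  have pos: "0 < (\<Prod>e\<in>S. 1 - p e)"
    using assms(4) ST by (intro prod_pos) auto
  show ?thesis unfolding eq using lt pos by simp
qed

theorem theorem1:
  fixes V :: "'v set" and E :: "('v \<times> 'v) set"
    and p w :: "'v \<times> 'v \<Rightarrow> real" and pmax B :: real and s t :: 'v
  assumes "network V E p pmax w"
    and "s \<in> V" and "t \<in> V"
    and "CT_CQMS_optimal V E p w s t B \<pi>1 \<pi>2"
  shows "critical_links \<pi>1 \<pi>2 \<subseteq> in_all_sp_links V E w s t"
proof
  fix c assume c: "c \<in> critical_links \<pi>1 \<pi>2"
  have net: "finite V" "E \<subseteq> V \<times> V" "pmax < 1" "\<forall>e\<in>E. 0 < p e \<and> p e \<le> pmax \<and> 0 < w e"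
    using assms(1) unfolding network_def by auto
  have wpos: "\<forall>e\<in>E. 0 < w e" using net by auto
  have ppos: "\<forall>e\<in>E. 0 < p e \<and> p e < 1" using net by force
  have feas: "\<pi>1 \<in> simple_paths V E s t" "\<pi>2 \<in> simple_paths V E s t"
    "CT_weight w \<pi>1 \<pi>2 \<le> B"
    and opt: "\<forall>\<sigma>1 \<sigma>2. CT_feasible V E w s t B \<sigma>1 \<sigma>2 \<longrightarrow>
        survivability p \<sigma>1 \<sigma>2 \<le> survivability p \<pi>1 \<pi>2"
    using assms(4) unfolding CT_CQMS_optimal_def CT_feasible_def by auto
  obtain xs1 where x1: "\<pi>1 = links_of xs1" "xs1 \<noteq> []" "hd xs1 = s" "last xs1 = t" "distinct xs1"
    "set xs1 \<subseteq> V" "links_of xs1 \<subseteq> E" using sp_obtain[OF feas(1)] by blast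
  obtain xs2 where x2: "\<pi>2 = links_of xs2" "xs2 \<noteq> []" "hd xs2 = s" "last xs2 = t" "distinct xs2"
    "set xs2 \<subseteq> V" "links_of xs2 \<subseteq> E" using sp_obtain[OF feas(2)] by blast
  show "c \<in> in_all_sp_links V E w s t"
    unfolding in_all_sp_links_def
  proof
    fix \<sigma> assume \<sigma>: "\<sigma> \<in> shortest_paths V E w s t"
    show "c \<in> \<sigma>"
    proof (rule ccontr)
      assume cn: "c \<notin> \<sigma>"
      have \<sigma>s: "\<sigma> \<in> simple_paths V E s t"
        and short: "\<forall>\<pi>'\<in>simple_paths V E s t. path_weight w \<sigma> \<le> path_weight w \<pi>'"
        using \<sigma> unfolding shortest_paths_def by auto
      obtain sg where sg: "\<sigma> = links_of sg" "sg \<noteq> []" "hd sg = s" "last sg = t" "distinct sg"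
        "set sg \<subseteq> V" "links_of sg \<subseteq> E" using sp_obtain[OF \<sigma>s] by blast
      obtain x y where cxy: "c = (x,y)" by (cases c)
      have c1: "(x,y) \<in> links_of xs1" and c2: "(x,y) \<in> links_of xs2"
        using c cxy x1(1) x2(1) unfolding critical_links_def by auto
      obtain a1 d1 where s1: "xs1 = a1 @ d1" "a1 \<noteq> []" "d1 \<noteq> []" "last a1 = x" "hd d1 = y"
        using split_link[OF c1] by blast
      obtain a2 d2 where s2: "xs2 = a2 @ d2" "a2 \<noteq> []" "d2 \<noteq> []" "last a2 = x" "hd d2 = y"
        using split_link[OF c2] by blast
      have short': "\<forall>\<pi>'\<in>simple_paths V E s t. path_weight w (links_of sg) \<le> path_weight w \<pi>'"
        using short sg(1) by simp
      have enot: "(x,y) \<notin> links_of sg" using cn cxy sg(1) by simp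
      note ex = exchange[OF wpos sg(2,5,3,4,6,7) short' enot s1 x1(5,3,4,6,7) s2 x2(5,3,4,6,7)]
      obtain \<rho>1 \<rho>2 where r: "\<rho>1 \<in> simple_paths V E s t" "\<rho>2 \<in> simple_paths V E s t"
        "path_weight w \<rho>1 + path_weight w \<rho>2 \<le> path_weight w (links_of xs1) + path_weight w (links_of xs2)"
        "\<rho>1 \<inter> \<rho>2 \<subseteq> links_of xs1 \<inter> links_of xs2 - {(x,y)}"
        using ex by blast
      have "CT_weight w \<rho>1 \<rho>2 \<le> B"
        using r(3) feas(3) x1(1) x2(1) unfolding CT_weight_def by simp
      then have "CT_feasible V E w s t B \<rho>1 \<rho>2"
        unfolding CT_feasible_def using r(1,2) by simp
      then have le: "survivability p \<rho>1 \<rho>2 \<le> survivability p \<pi>1 \<pi>2" using opt by blast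
      have T: "finite (\<pi>1 \<inter> \<pi>2)" using x1(1) by simp
      have S: "\<rho>1 \<inter> \<rho>2 \<subseteq> \<pi>1 \<inter> \<pi>2 - {c}" using r(4) x1(1) x2(1) cxy by simp
      have cT: "c \<in> \<pi>1 \<inter> \<pi>2" using c unfolding critical_links_def .
      have pT: "\<forall>e\<in>\<pi>1 \<inter> \<pi>2. 0 < p e \<and> p e < 1" using ppos x1(1,7) by blast
      have "survivability p \<pi>1 \<pi>2 < survivability p \<rho>1 \<rho>2"
        unfolding survivability_def critical_links_def by (rule prod_strict[OF T S cT pT])
      then show False using le by simp
    qed
  qed
qed


end
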